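(* In the modified market (with virtual buyers) described in the context, let $x^*\in\mathbb R^N_+$ be defined recursively, processing buyers in decreasing order of valuation with ties broken by index, by $$x^*_i=\min\Bigl(\frac{B_i}{v_i},\ \min_{H\subseteq H_i}\{f(E_{H\cup\{i\}})-x^*(H)\}\Bigr)\qquad(i\in N).$$ Then $x^*$ is an optimal allocation for liquid welfare: there is $w^*\in P$ with $w^*(E_i)=x^*_i$ for all $i\in N$, and $\sum_{i\in N}\min(v_ix^*_i,B_i)=\max_{w\in P}\sum_{i\in N}\min(v_iw(E_i),B_i)$. Moreover $x^*(N)=f(E_N)$.
   Context: Market model. Buyers $N_0=\{1,\dots,n\}$, sellers $M=\{1,\dots,m\}$, bipartite edge set $E_0\subseteq N_0\times M$; edge $(i,j)$ written $ij$; for a set $S$ of participants $E_S$ is the set of edges incident to a member of $S$; for a vector $w$ and a set $F$, $w(F)=\sum_{e\in F}w_e$. Each seller $j$ has a monotone submodular $f_j:2^{E_j}\to\mathbb R_+$ with $f_j(\emptyset)=0$ ($f_j(E_j)$ is her total amount of a homogeneous divisible good). Buyer $i$ has per-unit valuation $v_i>0$ and budget $B_i\ge0$; seller $j$ has per-unit valuation $\rho_j>0$. Modified market. For each seller $j$ add a virtual buyer $n+j$ adjacent only to $j$, with $v_{n+j}=\rho_j$ and $B_{n+j}=\infty$ (so $B_{n+j}/v_{n+j}=\infty$). Let $N=\{1,\dots,n+m\}$, $E=E_0\cup\{(n+j)j:j\in M\}$, and extend $f_j$ to subsets $F$ of $E_j$ (now including the edge $(n+j)j$) by $f_j(F)=f_j(E_j)$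 if $(n+j)j\in F$ and $f_j(F)$ unchanged otherwise. Let $P=\{w\in\mathbb R^E_+: w|_{E_j}\in P_j\ \forall j\}$ where $P_j=\{y\in\mathbb R^{E_j}_+: y(F)\le f_j(F)\ \forall F\subseteq E_j\}$, and $f(S)=\sum_{j\in M}f_j(S\cap E_j)$ for $S\subseteq E$. For $i\in N$, $H_i$ is the set of buyers $k\in N$ with $v_k>v_i$, or with $v_k=v_i$ and $k<i$. *)

theory Defs
  imports Complex_Main
begin

text \<open>Buyers and sellers are natural numbers; an edge is a pair (buyer, seller).
  Original buyers are 1..n, sellers 1..m, virtual buyer of seller j is n+j.\<close>

definition Emod :: "nat \<Rightarrow> nat \<Rightarrow> (nat \<times> nat) set \<Rightarrow> (nat \<times> nat) set" where
  "Emod n m E0 = E0 \<union> (\<lambda>j. (n + j, j)) ` {1..m}"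

definition sellerE :: "(nat \<times> nat) set \<Rightarrow> nat \<Rightarrow> (nat \<times> nat) set" where
  "sellerE E j = {e \<in> E. snd e = j}"

definition buyerE :: "(nat \<times> nat) set \<Rightarrow> nat set \<Rightarrow> (nat \<times> nat) set" where
  "buyerE E S = {e \<in> E. fst e \<in> S}"

definition fext :: "nat \<Rightarrow> (nat \<times> nat) set \<Rightarrow> (nat \<Rightarrow> (nat \<times> nat) set \<Rightarrow> real)
    \<Rightarrow> nat \<Rightarrow> (nat \<times> nat) set \<Rightarrow> real" where
  "fext n E0 fs j F = (if (n + j, j) \<in> F then fs j (sellerE E0 j) else fs j F)"

definition fmod :: "nat \<Rightarrow> nat \<Rightarrow> (nat \<times> nat) set \<Rightarrow> (nat \<Rightarrow> (nat \<times> nat) set \<Rightarrow> real)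
    \<Rightarrow> (nat \<times> nat) set \<Rightarrow> real" where
  "fmod n m E0 fs S = (\<Sum>j\<in>{1..m}. fext n E0 fs j (S \<inter> sellerE (Emod n m E0) j))"

text \<open>The polytope P (vectors indexed by E; values off E are irrelevant).\<close>
definition Pmod :: "nat \<Rightarrow> nat \<Rightarrow> (nat \<times> nat) set \<Rightarrow> (nat \<Rightarrow> (nat \<times> nat) set \<Rightarrow> real)
    \<Rightarrow> ((nat \<times> nat) \<Rightarrow> real) set" where
  "Pmod n m E0 fs = {w. (\<forall>e\<in>Emod n m E0. 0 \<le> w e) \<and>
      (\<forall>j\<in>{1..m}. \<forall>F. F \<subseteq> sellerE (Emod n m E0) j \<longrightarrow> sum w F \<le> fext n E0 fs j F)}"

definition vmod :: "nat \<Rightarrow> (nat \<Rightarrow> real) \<Rightarrow> (nat \<Rightarrow> real) \<Rightarrow> nat \<Rightarrow> real" where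
  "vmod n v \<rho> i = (if i \<le> n then v i else \<rho> (i - n))"

definition Hset :: "nat \<Rightarrow> nat \<Rightarrow> (nat \<Rightarrow> real) \<Rightarrow> (nat \<Rightarrow> real) \<Rightarrow> nat \<Rightarrow> nat set" where
  "Hset n m v \<rho> i = {k \<in> {1..n+m}. vmod n v \<rho> k > vmod n v \<rho> i \<or>
      (vmod n v \<rho> k = vmod n v \<rho> i \<and> k < i)}"

text \<open>min(v_i t, B_i); for virtual buyers B = \<infinity>, so the term is just v_i t.\<close>
definition lw_term :: "nat \<Rightarrow> (nat \<Rightarrow> real) \<Rightarrow> (nat \<Rightarrow> real) \<Rightarrow> (nat \<Rightarrow> real) \<Rightarrow> nat \<Rightarrow> real \<Rightarrow> real" where
  "lw_term n v \<rho> B i t = (if i \<le> n then min (v i * t) (B i) else \<rho> (i - n) * t)"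

text \<open>The recursive right-hand side defining x^*_i; for virtual buyers B_i/v_i = \<infinity>.\<close>
definition xrhs :: "nat \<Rightarrow> nat \<Rightarrow> (nat \<times> nat) set \<Rightarrow> (nat \<Rightarrow> (nat \<times> nat) set \<Rightarrow> real)
    \<Rightarrow> (nat \<Rightarrow> real) \<Rightarrow> (nat \<Rightarrow> real) \<Rightarrow> (nat \<Rightarrow> real) \<Rightarrow> (nat \<Rightarrow> real) \<Rightarrow> nat \<Rightarrow> real" where
  "xrhs n m E0 fs v \<rho> B x i =
     (let inner = Min ((\<lambda>H. fmod n m E0 fs (buyerE (Emod n m E0) (H \<union> {i})) - sum x H)
                        ` Pow (Hset n m v \<rho> i))
      in if i \<le> n then min (B i / v i) inner else inner)"

end

theory Submission
  imports Defs
begin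


lemma aggregate:
  fixes E :: "'e set" and f :: "'e set \<Rightarrow> real" and p :: "'e \<Rightarrow> 'n" and y :: "'n \<Rightarrow> real" and N :: "'n set"
  assumes "finite E"
    and "\<forall>S T. S \<subseteq> T \<and> T \<subseteq> E \<longrightarrow> f S \<le> f T"
    and "\<forall>S T. S \<subseteq> E \<and> T \<subseteq> E \<longrightarrow> f (S \<union> T) + f (S \<inter> T) \<le> f S + f T"
    and "f {} = 0"
    and "p ` E \<subseteq> N"
    and "\<forall>i\<in>N. 0 \<le> y i"
    and "\<forall>H. H \<subseteq> N \<longrightarrow> sum y H \<le> f {e\<in>E. p e \<in> H}"
  shows "\<exists>w. (\<forall>e\<in>E. 0 \<le> w e) \<and> (\<forall>F. F \<subseteq> E \<longrightarrow> sum w F \<le> f F) \<and> (\<forall>i\<in>N. sum w {e\<in>E. p e = i} = y i)"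
  using assms
proof (induction "card E" arbitrary: E f rule: less_induct)
  case less
  note fin = less.prems(1) and mono = less.prems(2) and sub = less.prems(3) and f0 = less.prems(4)
    and pE = less.prems(5) and y0 = less.prems(6) and yH = less.prems(7)
  show ?case
  proof (cases "inj_on p E")
    case True
    define w where "w e = y (p e)" for e
    have "\<forall>e\<in>E. 0 \<le> w e" using pE y0 unfolding w_def by auto
    moreover have "\<forall>F. F \<subseteq> E \<longrightarrow> sum w F \<le> f F"
    proof (intro allI impI)
      fix F assume F: "F \<subseteq> E"
      have injF: "inj_on p F" using True F inj_on_subset by blast
      have "sum w F = sum y (p ` F)" using sum.reindex[OF injF, of y] unfolding w_def by (simp add: comp_def)
      also have "\<dots> \<le> f {e\<in>E. p e \<in> p ` F}" using yH[rule_format, of "p ` F"] pE F by auto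
      also have "{e\<in>E. p e \<in> p ` F} = F" using True F unfolding inj_on_def by blast
      finally show "sum w F \<le> f F" .
    qed
    moreover have "\<forall>i\<in>N. sum w {e\<in>E. p e = i} = y i"
    proof
      fix i assume i: "i \<in> N"
      show "sum w {e\<in>E. p e = i} = y i"
      proof (cases "\<exists>e\<in>E. p e = i")
        case True
        then obtain e where e: "e \<in> E" "p e = i" by blast
        have "{e\<in>E. p e = i} = {e}" using e \<open>inj_on p E\<close> unfolding inj_on_def by blast
        then show ?thesis using e by (simp add: w_def)
      next
        case False
        have e1: "{e\<in>E. p e = i} = {}" using False by auto
        have "y i \<le> f {e\<in>E. p e = i}" using yH[rule_format, of "{i}"] i by simp
        then have "y i \<le> 0" unfolding e1 using f0 by simp
        moreover have "0 \<le> y i" using y0 i by simp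
        ultimately show ?thesis unfolding e1 by simp
      qed
    qed
    ultimately show ?thesis by blast
  next
    case False
    then obtain a b where ab: "a \<in> E" "b \<in> E" "a \<noteq> b" "p a = p b" unfolding inj_on_def by blast
    define E' where "E' = E - {b}"
    define phi where "phi S = (if a \<in> S then insert b S else S)" for S
    define f' where "f' S = f (phi S)" for S
    have cardlt: "card E' < card E" unfolding E'_def by (rule card_Diff1_less[OF fin ab(2)])
    have finE': "finite E'" using fin E'_def by simp
    have phiE: "phi S \<subseteq> E" if "S \<subseteq> E'" for S using that ab unfolding phi_def E'_def by auto
    have mono': "\<forall>S T. S \<subseteq> T \<and> T \<subseteq> E' \<longrightarrow> f' S \<le> f' T"
    proof (intro allI impI)
      fix S T assume "S \<subseteq> T \<and> T \<subseteq> E'"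
      then have "phi S \<subseteq> phi T" "phi T \<subseteq> E" using phiE unfolding phi_def by auto
      then show "f' S \<le> f' T" unfolding f'_def using mono by blast
    qed
    have sub': "\<forall>S T. S \<subseteq> E' \<and> T \<subseteq> E' \<longrightarrow> f' (S \<union> T) + f' (S \<inter> T) \<le> f' S + f' T"
    proof (intro allI impI)
      fix S T assume ST: "S \<subseteq> E' \<and> T \<subseteq> E'"
      then have bS: "b \<notin> S" "b \<notin> T" unfolding E'_def by auto
      have "phi (S \<union> T) = phi S \<union> phi T" unfolding phi_def by auto
      moreover have "phi (S \<inter> T) = phi S \<inter> phi T" unfolding phi_def using bS by auto
      moreover have "phi S \<subseteq> E" "phi T \<subseteq> E" using phiE ST by auto
      moreover have "f (phi S \<union> phi T) + f (phi S \<inter> phi T) \<le> f (phi S) + f (phi T)"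
        using sub calculation(3,4) by blast
      ultimately show "f' (S \<union> T) + f' (S \<inter> T) \<le> f' S + f' T"
        unfolding f'_def by simp
    qed
    have f'0: "f' {} = 0" unfolding f'_def phi_def using f0 by simp
    have pE': "p ` E' \<subseteq> N" using pE E'_def by auto
    have yH': "\<forall>H. H \<subseteq> N \<longrightarrow> sum y H \<le> f' {e\<in>E'. p e \<in> H}"
    proof (intro allI impI)
      fix H assume H: "H \<subseteq> N"
      have "phi {e\<in>E'. p e \<in> H} = {e\<in>E. p e \<in> H}"
        unfolding phi_def E'_def using ab by auto
      then show "sum y H \<le> f' {e\<in>E'. p e \<in> H}" using yH H unfolding f'_def by simp
    qed
    obtain w' where w'0: "\<forall>e\<in>E'. 0 \<le> w' e" and w'F: "\<forall>F. F \<subseteq> E' \<longrightarrow> sum w' F \<le> f' F"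
      and w'i: "\<forall>i\<in>N. sum w' {e\<in>E'. p e = i} = y i"
      using less.hyps[OF cardlt finE' mono' sub' f'0 pE' y0 yH'] by blast
    have aE': "a \<in> E'" using ab E'_def by auto
    have monoR: "f S \<le> f T" if "S \<subseteq> T" "T \<subseteq> E" for S T using mono that by blast
    have subR: "f (S \<union> T) + f (S \<inter> T) \<le> f S + f T" if "S \<subseteq> E" "T \<subseteq> E" for S T using sub that by blast
    have w'FR: "sum w' F \<le> f' F" if "F \<subseteq> E'" for F using w'F that by blast
    have w'Ff: "sum w' F \<le> f F" if "F \<subseteq> E'" "a \<notin> F" for F
      using w'FR[OF that(1)] that(2) unfolding f'_def phi_def by simp
    define D where "D = (\<lambda>S. f (insert b S) - sum w' S) ` Pow (E - {a,b})"
    have finD: "finite D" "D \<noteq> {}" unfolding D_def using fin by auto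
    define U where "U = Min D"
    have U0: "0 \<le> U"
      unfolding U_def
    proof (subst Min_ge_iff[OF finD], intro ballI)
      fix d assume "d \<in> D"
      then obtain S where S: "S \<subseteq> E - {a,b}" "d = f (insert b S) - sum w' S" unfolding D_def by auto
      have "sum w' S \<le> f S" using w'Ff[of S] S E'_def by auto
      also have "f S \<le> f (insert b S)" using S ab by (intro monoR) auto
      finally show "0 \<le> d" using S by simp
    qed
    have Ule: "U \<le> f (insert b S) - sum w' S" if "S \<subseteq> E - {a,b}" for S
      unfolding U_def D_def using that fin by (intro Min_le) auto
    obtain S2 where S2: "S2 \<subseteq> E - {a,b}" "U = f (insert b S2) - sum w' S2"
      using Min_in[OF finD] unfolding U_def D_def by auto
    define t where "t = min (w' a) U"
    define w where "w = w'(a := w' a - t, b := t)"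
    have wa: "w a = w' a - t" and wb: "w b = t" and wo: "\<And>e. e \<noteq> a \<Longrightarrow> e \<noteq> b \<Longrightarrow> w e = w' e"
      unfolding w_def using ab by auto
    have sumw: "sum w S = sum w' S" if "a \<notin> S" "b \<notin> S" for S
      by (rule sum.cong[OF refl]) (metis that wo)
    have t0: "0 \<le> t" using w'0 aE' U0 t_def by auto
    have "\<forall>e\<in>E. 0 \<le> w e"
    proof
      fix e assume e: "e \<in> E"
      show "0 \<le> w e"
      proof (cases "e = a")
        case True then show ?thesis using wa t_def by auto
      next
        case False then show ?thesis using wb wo t0 w'0 e E'_def by (cases "e = b") auto
      qed
    qed
    moreover have "\<forall>F. F \<subseteq> E \<longrightarrow> sum w F \<le> f F"
    proof (intro allI impI)
      fix F assume F: "F \<subseteq> E"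
      have finF: "finite F" using F fin finite_subset by auto
      show "sum w F \<le> f F"
      proof (cases "a \<in> F")
        case aF: True
        show ?thesis
        proof (cases "b \<in> F")
          case bF: True
          have "sum w F = w a + w b + sum w (F - {a} - {b})"
            using finF aF bF ab by (simp add: sum.remove)
          also have "\<dots> = w' a + sum w' (F - {a} - {b})" using wa wb sumw[of "F - {a} - {b}"] by simp
          also have "\<dots> = sum w' (F - {b})"
          proof -
            have "F - {a} - {b} = F - {b} - {a}" by auto
            then show ?thesis using sum.remove[of "F - {b}" a w'] finF aF ab by simp
          qed
          also have "\<dots> \<le> f' (F - {b})" using F E'_def by (intro w'FR) auto
          also have "\<dots> = f F" unfolding f'_def phi_def using aF bF ab by (simp add: insert_absorb)
          finally show ?thesis .
        next
          case bF: False
          define S where "S = F - {a}"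
          have S: "S \<subseteq> E - {a,b}" "a \<notin> S" "b \<notin> S" "F = insert a S" using F bF aF S_def by auto
          have finS: "finite S" using finF S_def by auto
          have "sum w F = w' a - t + sum w' S" using S finS wa sumw[of S] by simp
          also have "\<dots> \<le> f F"
          proof (cases "t = w' a")
            case True
            have "sum w' S \<le> f S" using w'Ff[of S] S E'_def by auto
            also have "f S \<le> f F" using S F by (intro monoR) auto
            finally show ?thesis using True by simp
          next
            case False
            then have tU: "t = U" using t_def by auto
            have finS2: "finite S2" using S2 fin finite_subset by blast
            have X: "insert a S \<union> insert b S2 = insert b (insert a (S \<union> S2))" by auto
            have Y: "insert a S \<inter> insert b S2 = S \<inter> S2" using S S2 ab by auto
            have I1: "sum w' (insert a (S \<union> S2)) \<le> f (insert b (insert a (S \<union> S2)))"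
            proof -
              have "sum w' (insert a (S \<union> S2)) \<le> f' (insert a (S \<union> S2))"
                using S S2 E'_def aE' by (intro w'FR) auto
              also have "\<dots> = f (insert b (insert a (S \<union> S2)))" unfolding f'_def phi_def by simp
              finally show ?thesis .
            qed
            have I2: "sum w' (S \<inter> S2) \<le> f (S \<inter> S2)" using w'Ff[of "S \<inter> S2"] S E'_def by auto
            have I3: "f (insert a S \<union> insert b S2) + f (insert a S \<inter> insert b S2) \<le> f (insert a S) + f (insert b S2)"
              using S S2 ab by (intro subR) auto
            have I4: "sum w' (insert a (S \<union> S2)) = w' a + sum w' (S \<union> S2)"
              using S S2 finS finS2 by (subst sum.insert) auto
            have I5: "sum w' (S \<union> S2) + sum w' (S \<inter> S2) = sum w' S + sum w' S2"
              using sum.union_inter[OF finS finS2] by simp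
            show ?thesis using I1 I2 I3 I4 I5 X Y S2(2) tU S(4) by simp
          qed
          finally show ?thesis .
        qed
      next
        case aF: False
        show ?thesis
        proof (cases "b \<in> F")
          case bF: True
          define S where "S = F - {b}"
          have S: "S \<subseteq> E - {a,b}" "a \<notin> S" "b \<notin> S" "F = insert b S" using F bF aF S_def by auto
          have finS: "finite S" using finF S_def by auto
          have "sum w F = t + sum w' S" using S finS wb sumw[of S] by simp
          also have "\<dots> \<le> U + sum w' S" using t_def by simp
          also have "\<dots> \<le> f F" using Ule[OF S(1)] S(4) by simp
          finally show ?thesis .
        next
          case bF: False
          then show ?thesis using sumw[of F] aF w'Ff[of F] F E'_def by auto
        qed
      qed
    qed
    moreover have "\<forall>i\<in>N. sum w {e\<in>E. p e = i} = y i"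
    proof
      fix i assume i: "i \<in> N"
      show "sum w {e\<in>E. p e = i} = y i"
      proof (cases "i = p a")
        case True
        define K where "K = {e\<in>E. p e = i}"
        have K: "a \<in> K" "b \<in> K" "finite K" using True ab fin K_def by auto
        have "sum w K = w a + w b + sum w (K - {a} - {b})"
          using K ab by (simp add: sum.remove)
        also have "\<dots> = w' a + sum w' (K - {a} - {b})" using wa wb sumw[of "K - {a} - {b}"] by simp
        also have "\<dots> = sum w' (K - {b})"
        proof -
          have "K - {a} - {b} = K - {b} - {a}" by auto
          then show ?thesis using sum.remove[of "K - {b}" a w'] K ab by simp
        qed
        also have "K - {b} = {e\<in>E'. p e = i}" using K_def E'_def by auto
        finally show ?thesis using w'i i K_def by simp
      next
        case False
        have "{e\<in>E. p e = i} = {e\<in>E'. p e = i}" using False ab E'_def by auto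
        moreover have "a \<notin> {e\<in>E'. p e = i}" "b \<notin> {e\<in>E'. p e = i}" using False ab E'_def by auto
        ultimately show ?thesis using sumw w'i i by simp
      qed
    qed
    ultimately show ?thesis by blast
  qed
qed



lemma hset_sub: "Hset n m v \<rho> i \<subseteq> {1..n+m}" unfolding Hset_def by auto
lemma hset_irr: "i \<notin> Hset n m v \<rho> i" unfolding Hset_def by auto
lemma hset_trans: "k \<in> Hset n m v \<rho> i \<Longrightarrow> i \<in> Hset n m v \<rho> l \<Longrightarrow> k \<in> Hset n m v \<rho> l"
  unfolding Hset_def by auto
lemma hset_total: "i \<in> {1..n+m} \<Longrightarrow> k \<in> {1..n+m} \<Longrightarrow> i \<noteq> k \<Longrightarrow> k \<in> Hset n m v \<rho> i \<or> i \<in> Hset n m v \<rho> k"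
  unfolding Hset_def by auto
lemma hset_mono: "k \<in> Hset n m v \<rho> i \<Longrightarrow> vmod n v \<rho> i \<le> vmod n v \<rho> k"
  unfolding Hset_def by auto

lemma hset_max:
  assumes "finite S" "S \<noteq> {}" "S \<subseteq> {1..n+m}"
  shows "\<exists>l\<in>S. S - {l} \<subseteq> Hset n m v \<rho> l"
  using assms
proof (induction S rule: finite_ne_induct)
  case (singleton x) then show ?case by auto
next
  case (insert a F)
  then obtain l where l: "l \<in> F" "F - {l} \<subseteq> Hset n m v \<rho> l" by auto
  have "l \<noteq> a" using l insert by auto
  then have "l \<in> Hset n m v \<rho> a \<or> a \<in> Hset n m v \<rho> l" using hset_total[of a n m l v \<rho>] insert l by auto
  then show ?case
  proof
    assume la: "l \<in> Hset n m v \<rho> a"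
    have "insert a F - {a} \<subseteq> Hset n m v \<rho> a"
    proof
      fix k assume k: "k \<in> insert a F - {a}"
      show "k \<in> Hset n m v \<rho> a"
      proof (cases "k = l")
        case True then show ?thesis using la by simp
      next
        case False then have "k \<in> Hset n m v \<rho> l" using k l by auto
        then show ?thesis using hset_trans la by blast
      qed
    qed
    then show ?case by auto
  next
    assume "a \<in> Hset n m v \<rho> l"
    then have "insert a F - {l} \<subseteq> Hset n m v \<rho> l" using l by auto
    then show ?case using l by auto
  qed
qed

lemma weighted:
  fixes u d :: "nat \<Rightarrow> real"
  assumes "finite S" "S \<subseteq> {1..n+m}"
    and "\<forall>i\<in>S. 0 \<le> u i"
    and "\<forall>i\<in>S. \<forall>k\<in>S. k \<in> Hset n m v \<rho> i \<longrightarrow> u i \<le> u k"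
    and "\<forall>P. P \<subseteq> S \<and> (\<forall>i\<in>P. \<forall>k\<in>S. k \<in> Hset n m v \<rho> i \<longrightarrow> k \<in> P) \<longrightarrow> 0 \<le> sum d P"
  shows "0 \<le> (\<Sum>i\<in>S. u i * d i)"
  using assms
proof (induction "card S" arbitrary: S u rule: less_induct)
  case less
  show ?case
  proof (cases "S = {}")
    case True then show ?thesis by simp
  next
    case False
    obtain l where l: "l \<in> S" "S - {l} \<subseteq> Hset n m v \<rho> l"
      using hset_max[OF less.prems(1) False less.prems(2)] by blast
    define S' where "S' = S - {l}"
    define u' where "u' i = u i - u l" for i
    have c: "card S' < card S" unfolding S'_def by (rule card_Diff1_less[OF less.prems(1) l(1)])
    have f': "finite S'" "S' \<subseteq> {1..n+m}" using less.prems S'_def by auto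
    have u'0: "\<forall>i\<in>S'. 0 \<le> u' i" using l less.prems(4) S'_def u'_def by auto
    have u'm: "\<forall>i\<in>S'. \<forall>k\<in>S'. k \<in> Hset n m v \<rho> i \<longrightarrow> u' i \<le> u' k"
      using less.prems(4) S'_def u'_def by auto
    have pre: "\<forall>P. P \<subseteq> S' \<and> (\<forall>i\<in>P. \<forall>k\<in>S'. k \<in> Hset n m v \<rho> i \<longrightarrow> k \<in> P) \<longrightarrow> 0 \<le> sum d P"
    proof (intro allI impI)
      fix P assume P: "P \<subseteq> S' \<and> (\<forall>i\<in>P. \<forall>k\<in>S'. k \<in> Hset n m v \<rho> i \<longrightarrow> k \<in> P)"
      have "\<forall>i\<in>P. \<forall>k\<in>S. k \<in> Hset n m v \<rho> i \<longrightarrow> k \<in> P"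
      proof (intro ballI impI)
        fix i k assume i: "i \<in> P" and k: "k \<in> S" "k \<in> Hset n m v \<rho> i"
        have "k \<noteq> l"
        proof
          assume "k = l"
          moreover have "i \<in> Hset n m v \<rho> l" using i P l S'_def by auto
          ultimately show False using k hset_trans hset_irr by metis
        qed
        then show "k \<in> P" using P i k S'_def by auto
      qed
      then show "0 \<le> sum d P" using less.prems(5) P S'_def by auto
    qed
    have IH: "0 \<le> (\<Sum>i\<in>S'. u' i * d i)" using less.hyps[OF c f' u'0 u'm pre] .
    have dS: "0 \<le> sum d S" using less.prems(5) by auto
    have "(\<Sum>i\<in>S. u i * d i) = u l * d l + (\<Sum>i\<in>S'. u i * d i)"
      unfolding S'_def using less.prems(1) l(1) by (simp add: sum.remove)
    also have "(\<Sum>i\<in>S'. u i * d i) = (\<Sum>i\<in>S'. u' i * d i) + u l * sum d S'"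
      unfolding u'_def by (simp add: left_diff_distrib sum_subtractf sum_distrib_left)
    also have "u l * d l + ((\<Sum>i\<in>S'. u' i * d i) + u l * sum d S') = (\<Sum>i\<in>S'. u' i * d i) + u l * sum d S"
      unfolding S'_def using less.prems(1) l(1) by (simp add: sum.remove algebra_simps)
    finally show ?thesis using IH dS less.prems(3) l(1) by simp
  qed
qed



locale mkt =
  fixes n m :: nat
    and E0 :: "(nat \<times> nat) set"
    and fs :: "nat \<Rightarrow> (nat \<times> nat) set \<Rightarrow> real"
  assumes E0_sub: "E0 \<subseteq> {1..n} \<times> {1..m}"
    and f_empty: "\<forall>j\<in>{1..m}. fs j {} = 0"
    and f_mono: "\<forall>j\<in>{1..m}. \<forall>F G. F \<subseteq> G \<and> G \<subseteq> sellerE E0 j \<longrightarrow> fs j F \<le> fs j G"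
    and f_submod: "\<forall>j\<in>{1..m}. \<forall>F G. F \<subseteq> sellerE E0 j \<and> G \<subseteq> sellerE E0 j \<longrightarrow>
                      fs j (F \<union> G) + fs j (F \<inter> G) \<le> fs j F + fs j G"
begin

abbreviation "EE \<equiv> Emod n m E0"
abbreviation "ff \<equiv> fmod n m E0 fs"
abbreviation "fe \<equiv> fext n E0 fs"

lemma finE: "finite EE"
proof -
  have "finite E0" using E0_sub finite_subset by blast
  then show ?thesis unfolding Emod_def by simp
qed

lemma EE_sub: "EE \<subseteq> {1..n+m} \<times> {1..m}"
  using E0_sub unfolding Emod_def by auto

lemma virt_notin: "(n + j, j) \<notin> E0" using E0_sub by auto

lemma sellerE_Emod: "j \<in> {1..m} \<Longrightarrow> sellerE EE j = insert (n + j, j) (sellerE E0 j)"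
  unfolding sellerE_def Emod_def by auto

lemma sub_sellerE0: "j \<in> {1..m} \<Longrightarrow> F \<subseteq> sellerE EE j \<Longrightarrow> (n + j, j) \<notin> F \<Longrightarrow> F \<subseteq> sellerE E0 j"
  using sellerE_Emod by auto

lemma fe_mono:
  assumes j: "j \<in> {1..m}" and "F \<subseteq> G" "G \<subseteq> sellerE EE j"
  shows "fe j F \<le> fe j G"
proof -
  have fm: "fs j A \<le> fs j C" if "A \<subseteq> C" "C \<subseteq> sellerE E0 j" for A C using f_mono j that by blast
  show ?thesis
  proof (cases "(n+j, j) \<in> F")
    case True then show ?thesis using assms unfolding fext_def by auto
  next
    case nF: False
    have F0: "F \<subseteq> sellerE E0 j" using sub_sellerE0[OF j] assms nF by blast
    show ?thesis
    proof (cases "(n+j, j) \<in> G")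
      case True then show ?thesis using nF F0 fm unfolding fext_def by auto
    next
      case False
      have G0: "G \<subseteq> sellerE E0 j" using sub_sellerE0[OF j] assms False by blast
      then show ?thesis using nF False fm assms unfolding fext_def by auto
    qed
  qed
qed

lemma fe_sub:
  assumes j: "j \<in> {1..m}" and FG: "F \<subseteq> sellerE EE j" "G \<subseteq> sellerE EE j"
  shows "fe j (F \<union> G) + fe j (F \<inter> G) \<le> fe j F + fe j G"
proof -
  have fm: "fs j A \<le> fs j C" if "A \<subseteq> C" "C \<subseteq> sellerE E0 j" for A C using f_mono j that by blast
  have fsub: "fs j (A \<union> C) + fs j (A \<inter> C) \<le> fs j A + fs j C" if "A \<subseteq> sellerE E0 j" "C \<subseteq> sellerE E0 j" for A C
    using f_submod j that by blast
  let ?v = "(n+j, j)"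
  show ?thesis
  proof (cases "?v \<in> F")
    case vF: True
    show ?thesis
    proof (cases "?v \<in> G")
      case True then show ?thesis using vF unfolding fext_def by auto
    next
      case False
      have G0: "G \<subseteq> sellerE E0 j" using sub_sellerE0[OF j] FG False by blast
      have "fs j (F \<inter> G) \<le> fs j G" using G0 by (intro fm) auto
      then show ?thesis using vF False unfolding fext_def by auto
    qed
  next
    case nF: False
    have F0: "F \<subseteq> sellerE E0 j" using sub_sellerE0[OF j] FG nF by blast
    show ?thesis
    proof (cases "?v \<in> G")
      case True
      have "fs j (F \<inter> G) \<le> fs j F" using F0 by (intro fm) auto
      then show ?thesis using nF True unfolding fext_def by auto
    next
      case False
      have G0: "G \<subseteq> sellerE E0 j" using sub_sellerE0[OF j] FG False by blast
      then show ?thesis using nF False fsub[OF F0 G0] unfolding fext_def by auto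
    qed
  qed
qed

lemma fe_empty: "j \<in> {1..m} \<Longrightarrow> fe j {} = 0"
  unfolding fext_def using f_empty by auto

lemma ff_mono: "S \<subseteq> T \<Longrightarrow> ff S \<le> ff T"
  unfolding fmod_def by (intro sum_mono fe_mono) auto

lemma ff_sub: "ff (S \<union> T) + ff (S \<inter> T) \<le> ff S + ff T"
proof -
  have "ff (S \<union> T) + ff (S \<inter> T) =
    (\<Sum>j\<in>{1..m}. fe j ((S \<inter> sellerE EE j) \<union> (T \<inter> sellerE EE j)) + fe j ((S \<inter> sellerE EE j) \<inter> (T \<inter> sellerE EE j)))"
    unfolding fmod_def sum.distrib[symmetric] by (intro sum.cong refl arg_cong2[where f="(+)"] arg_cong[where f="fe _"]) auto
  also have "\<dots> \<le> (\<Sum>j\<in>{1..m}. fe j (S \<inter> sellerE EE j) + fe j (T \<inter> sellerE EE j))"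
    by (intro sum_mono fe_sub) auto
  also have "\<dots> = ff S + ff T" unfolding fmod_def sum.distrib by simp
  finally show ?thesis .
qed

lemma ff_empty: "ff {} = 0"
  unfolding fmod_def using fe_empty by simp

lemma ff_single:
  assumes j: "j \<in> {1..m}" and F: "F \<subseteq> sellerE EE j"
  shows "ff F = fe j F"
proof -
  have "ff F = fe j (F \<inter> sellerE EE j) + (\<Sum>j'\<in>{1..m} - {j}. fe j' (F \<inter> sellerE EE j'))"
    unfolding fmod_def using j by (simp add: sum.remove)
  also have "(\<Sum>j'\<in>{1..m} - {j}. fe j' (F \<inter> sellerE EE j')) = 0"
  proof (intro sum.neutral ballI)
    fix j' assume j': "j' \<in> {1..m} - {j}"
    have "F \<inter> sellerE EE j' = {}" using F j' unfolding sellerE_def by auto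
    then show "fe j' (F \<inter> sellerE EE j') = 0" using fe_empty j' by simp
  qed
  finally show ?thesis using F by (simp add: Int_absorb2)
qed

lemma ff_full:
  assumes "{n+1..n+m} \<subseteq> H" "{n+1..n+m} \<subseteq> K"
  shows "ff (buyerE EE H) = ff (buyerE EE K)"
  unfolding fmod_def
proof (intro sum.cong refl)
  fix j assume j: "j \<in> {1..m}"
  have "(n+j, j) \<in> buyerE EE H \<inter> sellerE EE j" "(n+j, j) \<in> buyerE EE K \<inter> sellerE EE j"
    using j assms unfolding buyerE_def sellerE_def Emod_def by auto
  then show "fe j (buyerE EE H \<inter> sellerE EE j) = fe j (buyerE EE K \<inter> sellerE EE j)"
    unfolding fext_def by simp
qed

lemma buyerE_Un: "buyerE EE (H \<union> K) = buyerE EE H \<union> buyerE EE K" unfolding buyerE_def by auto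
lemma buyerE_Int: "buyerE EE (H \<inter> K) = buyerE EE H \<inter> buyerE EE K" unfolding buyerE_def by auto
lemma buyerE_mono: "H \<subseteq> K \<Longrightarrow> buyerE EE H \<subseteq> buyerE EE K" unfolding buyerE_def by auto

lemma g_mono: "H \<subseteq> K \<Longrightarrow> ff (buyerE EE H) \<le> ff (buyerE EE K)"
  by (intro ff_mono buyerE_mono)

lemma g_sub: "ff (buyerE EE (H \<union> K)) + ff (buyerE EE (H \<inter> K)) \<le> ff (buyerE EE H) + ff (buyerE EE K)"
  unfolding buyerE_Un buyerE_Int by (rule ff_sub)

lemma g_empty: "ff (buyerE EE {}) = 0"
  using ff_empty unfolding buyerE_def by simp

lemma sum_buyers:
  assumes "H \<subseteq> {1..n+m}"
  shows "(\<Sum>i\<in>H. sum w (buyerE EE {i})) = sum w (buyerE EE H)"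
proof -
  have finH: "finite H" using assms finite_subset by blast
  have finS: "finite (buyerE EE H)" using finE unfolding buyerE_def by simp
  have "sum w (buyerE EE H) = (\<Sum>i\<in>H. sum w {e \<in> buyerE EE H. fst e = i})"
  proof -
    have im: "fst ` buyerE EE H \<subseteq> H" unfolding buyerE_def by auto
    show ?thesis using sum.group[OF finS finH im, of w] by simp
  qed
  also have "\<dots> = (\<Sum>i\<in>H. sum w (buyerE EE {i}))"
    by (intro sum.cong refl arg_cong[where f="sum w"]) (auto simp: buyerE_def)
  finally show ?thesis by simp
qed

lemma P_le:
  assumes w: "w \<in> Pmod n m E0 fs" and that: "S \<subseteq> EE"
  shows "sum w S \<le> ff S"
proof -
  have finS: "finite S" using finE that finite_subset by blast
  have sndS: "snd ` S \<subseteq> {1..m}" using that EE_sub by auto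
  have "sum w S = (\<Sum>j\<in>{1..m}. sum w {e \<in> S. snd e = j})"
    using sum.group[OF finS _ sndS, of w] by simp
  also have "\<dots> \<le> (\<Sum>j\<in>{1..m}. fe j (S \<inter> sellerE EE j))"
  proof (intro sum_mono)
    fix j assume j: "j \<in> {1..m}"
    have eq: "{e \<in> S. snd e = j} = S \<inter> sellerE EE j" using that unfolding sellerE_def by auto
    show "sum w {e \<in> S. snd e = j} \<le> fe j (S \<inter> sellerE EE j)"
      unfolding eq using w j unfolding Pmod_def by auto
  qed
  also have "\<dots> = ff S" unfolding fmod_def ..
  finally show ?thesis .
qed

end



locale mx = mkt n m E0 fs for n m E0 fs +
  fixes v B \<rho> x :: "nat \<Rightarrow> real"
  assumes v_pos: "\<forall>i\<in>{1..n}. 0 < v i"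
    and B_nonneg: "\<forall>i\<in>{1..n}. 0 \<le> B i"
    and \<rho>_pos: "\<forall>j\<in>{1..m}. 0 < \<rho> j"
    and x_rec: "\<forall>i\<in>{1..n+m}. x i = xrhs n m E0 fs v \<rho> B x i"
begin

abbreviation "NN \<equiv> {1..n+m}"
abbreviation "g H \<equiv> ff (buyerE EE H)"
abbreviation "HS i \<equiv> Hset n m v \<rho> i"
abbreviation "inner i \<equiv> Min ((\<lambda>H. g (H \<union> {i}) - sum x H) ` Pow (HS i))"

lemma fin_img: "finite ((\<lambda>H. g (H \<union> {i}) - sum x H) ` Pow (HS i))"
  "((\<lambda>H. g (H \<union> {i}) - sum x H) ` Pow (HS i)) \<noteq> {}"
proof -
  have "finite (HS i)" by (rule finite_subset[OF hset_sub]) simp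
  then show "finite ((\<lambda>H. g (H \<union> {i}) - sum x H) ` Pow (HS i))" by simp
  have "{} \<in> Pow (HS i)" by simp
  then show "((\<lambda>H. g (H \<union> {i}) - sum x H) ` Pow (HS i)) \<noteq> {}" by blast
qed

lemma x_eq: "i \<in> NN \<Longrightarrow> x i = (if i \<le> n then min (B i / v i) (inner i) else inner i)"
proof -
  assume i: "i \<in> NN"
  have "x i = xrhs n m E0 fs v \<rho> B x i" using x_rec i by (rule bspec)
  then show ?thesis unfolding xrhs_def Let_def .
qed

lemma x_le_inner: "i \<in> NN \<Longrightarrow> x i \<le> inner i"
  using x_eq by (cases "i \<le> n") auto

lemma xrhs_le: "i \<in> NN \<Longrightarrow> H \<subseteq> HS i \<Longrightarrow> x i \<le> g (H \<union> {i}) - sum x H"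
  using x_le_inner[of i] Min_le[OF fin_img(1), of "g (H \<union> {i}) - sum x H" i] by auto

lemma x_cap: "i \<in> {1..n} \<Longrightarrow> x i \<le> B i / v i"
  using x_eq[of i] by auto

lemma x_attain:
  assumes "i \<in> NN" "\<not> (i \<le> n \<and> x i = B i / v i)"
  shows "\<exists>H \<subseteq> HS i. x i = g (H \<union> {i}) - sum x H"
proof -
  have "x i = inner i" using x_eq[OF assms(1)] assms(2) by (cases "i \<le> n") (auto simp: min_def)
  then show ?thesis using Min_in[OF fin_img(1) fin_img(2), of i] by auto
qed

lemma xle: "H \<subseteq> NN \<Longrightarrow> sum x H \<le> g H"
proof (cases "H = {}")
  case True then show ?thesis using g_empty by simp
next
  case False
  assume H: "H \<subseteq> NN"
  have finH: "finite H" using H finite_subset by blast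
  obtain l where l: "l \<in> H" "H - {l} \<subseteq> HS l" using hset_max[OF finH False H] by blast
  have "sum x H = x l + sum x (H - {l})" using finH l(1) by (simp add: sum.remove)
  also have "\<dots> \<le> g ((H - {l}) \<union> {l})" using xrhs_le[of l "H - {l}"] l H by auto
  also have "(H - {l}) \<union> {l} = H" using l by auto
  finally show ?thesis .
qed

lemma x_nonneg: "i \<in> NN \<Longrightarrow> 0 \<le> x i"
proof -
  assume i: "i \<in> NN"
  have "0 \<le> inner i"
  proof (subst Min_ge_iff[OF fin_img], intro ballI)
    fix d assume "d \<in> (\<lambda>H. g (H \<union> {i}) - sum x H) ` Pow (HS i)"
    then obtain H where H: "H \<subseteq> HS i" "d = g (H \<union> {i}) - sum x H" by auto
    have "sum x H \<le> g H" using H hset_sub by (intro xle) blast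
    also have "g H \<le> g (H \<union> {i})" by (intro g_mono) auto
    finally show "0 \<le> d" using H by simp
  qed
  moreover have "i \<le> n \<Longrightarrow> 0 \<le> B i / v i" using i v_pos B_nonneg by (simp add: less_imp_le)
  ultimately show ?thesis using x_eq[OF i] by auto
qed

definition tight where "tight T \<longleftrightarrow> T \<subseteq> NN \<and> sum x T = g T"

lemma tight_Un: assumes "tight A" "tight C" shows "tight (A \<union> C)"
proof -
  have AC: "A \<subseteq> NN" "C \<subseteq> NN" using assms tight_def by auto
  have fin: "finite A" "finite C" using AC finite_subset by blast+
  have "sum x (A \<union> C) + sum x (A \<inter> C) = sum x A + sum x C" using sum.union_inter[OF fin] .
  also have "\<dots> = g A + g C" using assms tight_def by simp
  also have "\<dots> \<ge> g (A \<union> C) + g (A \<inter> C)" using g_sub .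
  finally have "g (A \<union> C) + g (A \<inter> C) \<le> sum x (A \<union> C) + sum x (A \<inter> C)" .
  moreover have "sum x (A \<union> C) \<le> g (A \<union> C)" "sum x (A \<inter> C) \<le> g (A \<inter> C)" using AC by (intro xle; auto)+
  ultimately show ?thesis using AC unfolding tight_def by auto
qed

lemma tight_Union: "finite \<F> \<Longrightarrow> \<forall>T\<in>\<F>. tight T \<Longrightarrow> tight (\<Union>\<F>)"
proof (induction \<F> rule: finite_induct)
  case empty then show ?case using g_empty unfolding tight_def by simp
next
  case (insert T \<F>) then show ?case using tight_Un by simp
qed

lemma prefix_cert:
  assumes S: "S \<subseteq> NN" and pre: "\<forall>i\<in>S. HS i \<subseteq> S"
  shows "\<exists>U \<subseteq> S. tight U \<and> (\<forall>k\<in>S - U. k \<le> n \<and> x k = B k / v k)"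
proof -
  define U where "U = \<Union>{T \<in> Pow S. tight T}"
  have finS: "finite S" using S finite_subset by blast
  have tU: "tight U" unfolding U_def using finS by (intro tight_Union) auto
  have US: "U \<subseteq> S" unfolding U_def by auto
  have "\<forall>k\<in>S - U. k \<le> n \<and> x k = B k / v k"
  proof (rule ccontr)
    assume "\<not> ?thesis"
    then obtain k where k: "k \<in> S" "k \<notin> U" "\<not> (k \<le> n \<and> x k = B k / v k)" by blast
    obtain H where H: "H \<subseteq> HS k" "x k = g (H \<union> {k}) - sum x H"
      using x_attain k S by blast
    have kH: "k \<notin> H" using H hset_irr by blast
    have HN: "H \<union> {k} \<subseteq> S" using H pre k by auto
    have finH: "finite H" using HN finS finite_subset by blast
    have "sum x (H \<union> {k}) = g (H \<union> {k})" using H kH finH by simp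
    then have "tight (H \<union> {k})" using HN S unfolding tight_def by auto
    then have "H \<union> {k} \<subseteq> U" unfolding U_def using HN by blast
    then show False using k by auto
  qed
  then show ?thesis using tU US by blast
qed

lemma x_total: "sum x NN = g NN"
proof -
  obtain U where U: "U \<subseteq> NN" "tight U" "\<forall>k\<in>NN - U. k \<le> n \<and> x k = B k / v k"
  proof -
    have "\<forall>i\<in>NN. HS i \<subseteq> NN" using hset_sub by (intro ballI) 
    then show ?thesis using prefix_cert[OF order_refl] that by blast
  qed
  have virt: "{n+1..n+m} \<subseteq> U"
  proof
    fix k assume k: "k \<in> {n+1..n+m}"
    show "k \<in> U"
    proof (rule ccontr)
      assume "k \<notin> U"
      then have "k \<in> NN - U" using k by simp
      then have "k \<le> n" using U(3) by blast
      then show False using k by simp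
    qed
  qed
  have "g NN = g U" using ff_full[of NN U] virt by simp
  also have "\<dots> = sum x U" using U(2) unfolding tight_def by simp
  also have "\<dots> \<le> sum x NN"
  proof (rule sum_mono2)
    show "finite NN" by simp
    show "U \<subseteq> NN" by (rule U(1))
    show "\<And>b. b \<in> NN - U \<Longrightarrow> 0 \<le> x b" using x_nonneg by simp
  qed
  finally show ?thesis using xle[of NN] by simp
qed

end



lemma lw_eq:
  assumes "i \<in> {1..n+m}" "\<forall>i\<in>{1..n}. 0 < v i"
  shows "lw_term n v \<rho> B i t = vmod n v \<rho> i * (if i \<le> n then min t (B i / v i) else t)"
proof (cases "i \<le> n")
  case True
  then have vp: "0 < v i" using assms by auto
  have "min (v i * t) (B i) = v i * min t (B i / v i)"
  proof (cases "t \<le> B i / v i")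
    case True
    then have "v i * t \<le> B i" using vp by (simp add: pos_le_divide_eq mult.commute)
    then show ?thesis using True by simp
  next
    case False
    then have "\<not> v i * t \<le> B i" using vp by (simp add: pos_le_divide_eq mult.commute)
    then show ?thesis using False vp by simp
  qed
  then show ?thesis using True unfolding lw_term_def vmod_def by simp
next
  case False
  then show ?thesis unfolding lw_term_def vmod_def by simp
qed

theorem proposition2p1:
  fixes n m :: nat
    and E0 :: "(nat \<times> nat) set"
    and fs :: "nat \<Rightarrow> (nat \<times> nat) set \<Rightarrow> real"
    and v B \<rho> x :: "nat \<Rightarrow> real"
  assumes E0_sub: "E0 \<subseteq> {1..n} \<times> {1..m}"
    and f_empty: "\<forall>j\<in>{1..m}. fs j {} = 0"
    and f_nonneg: "\<forall>j\<in>{1..m}. \<forall>F. F \<subseteq> sellerE E0 j \<longrightarrow> 0 \<le> fs j F"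
    and f_mono: "\<forall>j\<in>{1..m}. \<forall>F G. F \<subseteq> G \<and> G \<subseteq> sellerE E0 j \<longrightarrow> fs j F \<le> fs j G"
    and f_submod: "\<forall>j\<in>{1..m}. \<forall>F G. F \<subseteq> sellerE E0 j \<and> G \<subseteq> sellerE E0 j \<longrightarrow>
                      fs j (F \<union> G) + fs j (F \<inter> G) \<le> fs j F + fs j G"
    and v_pos: "\<forall>i\<in>{1..n}. 0 < v i"
    and B_nonneg: "\<forall>i\<in>{1..n}. 0 \<le> B i"
    and \<rho>_pos: "\<forall>j\<in>{1..m}. 0 < \<rho> j"
    and x_rec: "\<forall>i\<in>{1..n+m}. x i = xrhs n m E0 fs v \<rho> B x i"
  shows "(\<exists>w\<in>Pmod n m E0 fs.
            (\<forall>i\<in>{1..n+m}. sum w (buyerE (Emod n m E0) {i}) = x i) \<and>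
            (\<Sum>i\<in>{1..n+m}. lw_term n v \<rho> B i (x i)) =
              (\<Sum>i\<in>{1..n+m}. lw_term n v \<rho> B i (sum w (buyerE (Emod n m E0) {i}))) \<and>
            (\<forall>w'\<in>Pmod n m E0 fs.
               (\<Sum>i\<in>{1..n+m}. lw_term n v \<rho> B i (sum w' (buyerE (Emod n m E0) {i})))
               \<le> (\<Sum>i\<in>{1..n+m}. lw_term n v \<rho> B i (x i))))
         \<and> sum x {1..n+m} = fmod n m E0 fs (buyerE (Emod n m E0) {1..n+m})"
proof -
  interpret M: mx n m E0 fs v B \<rho> x
    by unfold_locales (fact assms)+
  let ?E = "Emod n m E0"
  let ?N = "{1..n+m}"
  have bE: "{e \<in> ?E. fst e \<in> H} = buyerE ?E H" for H unfolding buyerE_def by simp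
  have bE1: "{e \<in> ?E. fst e = i} = buyerE ?E {i}" for i unfolding buyerE_def by simp
  have xnn: "\<forall>i\<in>?N. 0 \<le> x i" using M.x_nonneg by blast
  have "\<exists>w. (\<forall>e\<in>?E. 0 \<le> w e) \<and> (\<forall>F. F \<subseteq> ?E \<longrightarrow> sum w F \<le> fmod n m E0 fs F) \<and>
      (\<forall>i\<in>?N. sum w {e\<in>?E. fst e = i} = x i)"
  proof (rule aggregate)
    show "finite ?E" by (rule M.finE)
    show "\<forall>S T. S \<subseteq> T \<and> T \<subseteq> ?E \<longrightarrow> fmod n m E0 fs S \<le> fmod n m E0 fs T"
      using M.ff_mono by blast
    show "\<forall>S T. S \<subseteq> ?E \<and> T \<subseteq> ?E \<longrightarrow> fmod n m E0 fs (S \<union> T) + fmod n m E0 fs (S \<inter> T) \<le> fmod n m E0 fs S + fmod n m E0 fs T"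
      using M.ff_sub by blast
    show "fmod n m E0 fs {} = 0" by (rule M.ff_empty)
    show "fst ` ?E \<subseteq> ?N" using M.EE_sub by auto
    show "\<forall>i\<in>?N. 0 \<le> x i" by (rule xnn)
    show "\<forall>H. H \<subseteq> ?N \<longrightarrow> sum x H \<le> fmod n m E0 fs {e\<in>?E. fst e \<in> H}"
      unfolding bE using M.xle by blast
  qed
  then obtain w where w0: "\<forall>e\<in>?E. 0 \<le> w e" and wF: "\<forall>F. F \<subseteq> ?E \<longrightarrow> sum w F \<le> fmod n m E0 fs F"
    and wx: "\<forall>i\<in>?N. sum w (buyerE ?E {i}) = x i" unfolding bE1 by blast
  have wP: "w \<in> Pmod n m E0 fs"
    unfolding Pmod_def
  proof (intro CollectI conjI ballI allI impI)
    show "\<And>e. e \<in> ?E \<Longrightarrow> 0 \<le> w e" using w0 by blast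
    fix j F assume j: "j \<in> {1..m}" and F: "F \<subseteq> sellerE ?E j"
    have "F \<subseteq> ?E" using F unfolding sellerE_def by auto
    then have "sum w F \<le> fmod n m E0 fs F" using wF by blast
    also have "\<dots> = fext n E0 fs j F" using M.ff_single[OF j F] .
    finally show "sum w F \<le> fext n E0 fs j F" .
  qed
  have vm0: "\<forall>i\<in>?N. 0 \<le> vmod n v \<rho> i"
  proof
    fix i assume i: "i \<in> ?N"
    show "0 \<le> vmod n v \<rho> i"
    proof (cases "i \<le> n")
      case True then show ?thesis using i v_pos unfolding vmod_def by (simp add: less_imp_le)
    next
      case False
      then have "i - n \<in> {1..m}" using i by auto
      then show ?thesis using False \<rho>_pos unfolding vmod_def by (simp add: less_imp_le)
    qed
  qed
  have lwx: "lw_term n v \<rho> B i (x i) = vmod n v \<rho> i * x i" if i: "i \<in> ?N" for i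
  proof -
    have "i \<le> n \<Longrightarrow> min (x i) (B i / v i) = x i" using M.x_cap[of i] i by simp
    then show ?thesis using lw_eq[OF i v_pos, of \<rho> B "x i"] by (cases "i \<le> n") auto
  qed
  have opt: "(\<Sum>i\<in>?N. lw_term n v \<rho> B i (sum w' (buyerE ?E {i}))) \<le> (\<Sum>i\<in>?N. lw_term n v \<rho> B i (x i))"
    if w'P: "w' \<in> Pmod n m E0 fs" for w'
  proof -
    define y where "y i = sum w' (buyerE ?E {i})" for i
    define z where "z i = (if i \<le> n then min (y i) (B i / v i) else y i)" for i
    have yH: "sum y H \<le> fmod n m E0 fs (buyerE ?E H)" if "H \<subseteq> ?N" for H
    proof -
      have "sum y H = sum w' (buyerE ?E H)" unfolding y_def using M.sum_buyers[OF that] .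
      also have "\<dots> \<le> fmod n m E0 fs (buyerE ?E H)" using M.P_le[OF w'P] unfolding buyerE_def by auto
      finally show ?thesis .
    qed
    have zy: "z i \<le> y i" for i unfolding z_def by auto
    have zx: "z k \<le> x k" if "k \<le> n \<and> x k = B k / v k" for k using that unfolding z_def by auto
    have pre: "\<forall>P. P \<subseteq> ?N \<and> (\<forall>i\<in>P. \<forall>k\<in>?N. k \<in> Hset n m v \<rho> i \<longrightarrow> k \<in> P) \<longrightarrow> 0 \<le> sum (\<lambda>i. x i - z i) P"
    proof (intro allI impI)
      fix P assume P: "P \<subseteq> ?N \<and> (\<forall>i\<in>P. \<forall>k\<in>?N. k \<in> Hset n m v \<rho> i \<longrightarrow> k \<in> P)"
      have Pp: "\<forall>i\<in>P. Hset n m v \<rho> i \<subseteq> P" using P hset_sub by blast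
      obtain U where U: "U \<subseteq> P" "M.tight U" "\<forall>k\<in>P - U. k \<le> n \<and> x k = B k / v k"
        using M.prefix_cert[of P] P Pp by blast
      have finP: "finite P" using P finite_subset by blast
      have finU: "finite U" using U(1) finP finite_subset by blast
      have "sum z P = sum z U + sum z (P - U)" using finP U(1) by (simp add: sum.subset_diff)
      also have "sum z U \<le> sum y U" using zy by (intro sum_mono) auto
      also have "sum y U \<le> fmod n m E0 fs (buyerE ?E U)" using yH U(1) P by auto
      also have "\<dots> = sum x U" using U(2) unfolding M.tight_def by simp
      also have "sum z (P - U) \<le> sum x (P - U)" using zx U(3) by (intro sum_mono) auto
      also have "sum x U + sum x (P - U) = sum x P" using finP U(1) by (simp add: sum.subset_diff)
      finally have "sum z P \<le> sum x P" by simp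
      then show "0 \<le> sum (\<lambda>i. x i - z i) P" by (simp add: sum_subtractf)
    qed
    have "0 \<le> (\<Sum>i\<in>?N. vmod n v \<rho> i * (x i - z i))"
    proof (rule weighted[of ?N n m])
      show "finite ?N" by simp
      show "?N \<subseteq> ?N" by simp
      show "\<forall>i\<in>?N. 0 \<le> vmod n v \<rho> i" by (rule vm0)
      show "\<forall>i\<in>?N. \<forall>k\<in>?N. k \<in> Hset n m v \<rho> i \<longrightarrow> vmod n v \<rho> i \<le> vmod n v \<rho> k"
        using hset_mono by blast
      show "\<forall>P. P \<subseteq> ?N \<and> (\<forall>i\<in>P. \<forall>k\<in>?N. k \<in> Hset n m v \<rho> i \<longrightarrow> k \<in> P) \<longrightarrow> 0 \<le> sum (\<lambda>i. x i - z i) P"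
        by (rule pre)
    qed
    then have "(\<Sum>i\<in>?N. vmod n v \<rho> i * z i) \<le> (\<Sum>i\<in>?N. vmod n v \<rho> i * x i)"
      by (simp add: right_diff_distrib sum_subtractf)
    moreover have "(\<Sum>i\<in>?N. lw_term n v \<rho> B i (sum w' (buyerE ?E {i}))) = (\<Sum>i\<in>?N. vmod n v \<rho> i * z i)"
    proof (intro sum.cong refl)
      fix i assume i: "i \<in> ?N"
      show "lw_term n v \<rho> B i (sum w' (buyerE ?E {i})) = vmod n v \<rho> i * z i"
        using lw_eq[OF i v_pos, of \<rho> B "sum w' (buyerE ?E {i})"] unfolding z_def y_def by simp
    qed
    moreover have "(\<Sum>i\<in>?N. lw_term n v \<rho> B i (x i)) = (\<Sum>i\<in>?N. vmod n v \<rho> i * x i)"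
      using lwx by (intro sum.cong refl) 
    ultimately show ?thesis by simp
  qed
  have "w \<in> Pmod n m E0 fs \<and> (\<forall>i\<in>?N. sum w (buyerE ?E {i}) = x i) \<and>
            (\<Sum>i\<in>?N. lw_term n v \<rho> B i (x i)) =
              (\<Sum>i\<in>?N. lw_term n v \<rho> B i (sum w (buyerE ?E {i}))) \<and>
            (\<forall>w'\<in>Pmod n m E0 fs.
               (\<Sum>i\<in>?N. lw_term n v \<rho> B i (sum w' (buyerE ?E {i})))
               \<le> (\<Sum>i\<in>?N. lw_term n v \<rho> B i (x i)))"
  proof (intro conjI ballI)
    show "w \<in> Pmod n m E0 fs" by (rule wP)
    show "\<And>i. i \<in> ?N \<Longrightarrow> sum w (buyerE ?E {i}) = x i" using wx by blast
    show "(\<Sum>i\<in>?N. lw_term n v \<rho> B i (x i)) = (\<Sum>i\<in>?N. lw_term n v \<rho> B i (sum w (buyerE ?E {i})))"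
      using wx by (intro sum.cong refl) simp
    show "\<And>w'. w' \<in> Pmod n m E0 fs \<Longrightarrow> (\<Sum>i\<in>?N. lw_term n v \<rho> B i (sum w' (buyerE ?E {i}))) \<le> (\<Sum>i\<in>?N. lw_term n v \<rho> B i (x i))"
      by (rule opt)
  qed
  then show ?thesis using M.x_total by blast
qed


end
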